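(* For a greedy policy, for every $n\ge1$ and every real $0\le x\le n$, $$\Gamma_{\mathbf R}[\lceil x\rceil]<\Gamma_{\mathbf S}[n-\lceil x\rceil]-\gamma\ \Longrightarrow\ R_{\mathbf G}(n)>x\ \Longrightarrow\ \Gamma_{\mathbf R}[\lfloor x\rfloor]\le\Gamma_{\mathbf S}[n-\lfloor x\rfloor]+\gamma.$$
   Context: Let $(r_i)_{i\ge1}$, $(s_i)_{i\ge1}$ be probability vectors on the positive integers with $\mu:=\sum_i r_is_i>0$, and $\gamma:=\sup_i r_i\vee\sup_i s_i$. Let $\{L_{\mathbf R}(n)\}_{n\ge1}$, $\{L_{\mathbf S}(n)\}_{n\ge1}$ be independent i.i.d. sequences with $\Pr(L_{\mathbf R}(1)=i)=r_i$, $\Pr(L_{\mathbf S}(1)=i)=s_i$. Put $X_{\mathbf R}(n)=s_{L_{\mathbf R}(n)}$, $X_{\mathbf S}(n)=r_{L_{\mathbf S}(n)}$, and $\Gamma_{\mathbf R}[m]=\sum_{j=1}^mX_{\mathbf R}(j)$, $\Gamma_{\mathbf S}[m]=\sum_{j=1}^mX_{\mathbf S}(j)$ (with $\Gamma[0]=0$). A reading policy is a $\{0,1\}$-valued process $C(n)$ ($C(n)=1$ iff the $n$-th record is read from $\mathbf R$), $R(n)=\sum_{j\le n}C(j)$, $S(n)=n-R(n)$, with $C(n)$ being $\mathcal F_{n-1}$-measurable where $\mathcal F_n=\mathcal F_0\vee\sigma(L_{\mathbf R}(1),\dots,L_{\mathbf R}(R(n));L_{\mathbf S}(1),\dots,L_{\mathbf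 S}(S(n)))$ and $\mathcal F_0$ (randomization) is independent of the labels. A greedy policy satisfies, for $n\ge1$, $C(n+1)=1$ if $\Gamma_{\mathbf S}[S(n)]>\Gamma_{\mathbf R}[R(n)]$ and $C(n+1)=0$ if $\Gamma_{\mathbf S}[S(n)]<\Gamma_{\mathbf R}[R(n)]$ (ties arbitrary); $R_{\mathbf G}(n)$ is its $R(n)$. *)

theory Defs
  imports Complex_Main
begin

text \<open>Probability vector on the positive integers (index 0 is unused).\<close>
definition prob_vec :: "(nat \<Rightarrow> real) \<Rightarrow> bool" where
  "prob_vec r \<longleftrightarrow> (\<forall>i\<ge>1. 0 \<le> r i) \<and> (\<lambda>i. r (Suc i)) sums 1"

definition gam :: "(nat \<Rightarrow> real) \<Rightarrow> (nat \<Rightarrow> real) \<Rightarrow> real" where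
  "gam r s = max (SUP i\<in>{1..}. r i) (SUP i\<in>{1..}. s i)"

definition GammaR :: "(nat \<Rightarrow> real) \<Rightarrow> (nat \<Rightarrow> nat) \<Rightarrow> nat \<Rightarrow> real" where
  "GammaR s LR m = (\<Sum>j=1..m. s (LR j))"

definition GammaS :: "(nat \<Rightarrow> real) \<Rightarrow> (nat \<Rightarrow> nat) \<Rightarrow> nat \<Rightarrow> real" where
  "GammaS r LS m = (\<Sum>j=1..m. r (LS j))"

text \<open>R(n) = number of j in 1..n with C(j) = 1 (C j = True means read from R).\<close>
definition Rcnt :: "(nat \<Rightarrow> bool) \<Rightarrow> nat \<Rightarrow> nat" where
  "Rcnt C n = card {j\<in>{1..n}. C j}"

definition greedy ::
  "(nat \<Rightarrow> real) \<Rightarrow> (nat \<Rightarrow> real) \<Rightarrow> (nat \<Rightarrow> nat) \<Rightarrow> (nat \<Rightarrow> nat) \<Rightarrow> (nat \<Rightarrow> bool) \<Rightarrow> bool" where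
  "greedy r s LR LS C \<longleftrightarrow>
     (\<forall>n\<ge>1. (GammaS r LS (n - Rcnt C n) > GammaR s LR (Rcnt C n) \<longrightarrow> C (Suc n)) \<and>
            (GammaS r LS (n - Rcnt C n) < GammaR s LR (Rcnt C n) \<longrightarrow> \<not> C (Suc n)))"

end

theory Submission
  imports Defs
begin

lemma Rcnt_Suc: "Rcnt C (Suc n) = Rcnt C n + (if C (Suc n) then 1 else 0)"
proof -
  have "{j\<in>{1..Suc n}. C j} = {j\<in>{1..n}. C j} \<union> (if C (Suc n) then {Suc n} else {})"
    by (auto simp: le_Suc_eq)
  then show ?thesis unfolding Rcnt_def by (simp add: card_insert_if)
qed

lemma Rcnt_le: "Rcnt C n \<le> n"
proof -
  have "Rcnt C n \<le> card {1..n}" unfolding Rcnt_def by (rule card_mono) auto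
  then show ?thesis by simp
qed

lemma Rcnt_0: "Rcnt C 0 = 0" by (simp add: Rcnt_def)

lemma GammaR_Suc: "GammaR s LR (Suc m) = GammaR s LR m + s (LR (Suc m))"
  by (simp add: GammaR_def)

lemma GammaS_Suc: "GammaS r LS (Suc m) = GammaS r LS m + r (LS (Suc m))"
  by (simp add: GammaS_def)

lemma GammaR_0: "GammaR s LR 0 = 0" by (simp add: GammaR_def)
lemma GammaS_0: "GammaS r LS 0 = 0" by (simp add: GammaS_def)

lemma GammaR_mono:
  assumes "\<And>j. j \<ge> 1 \<Longrightarrow> 0 \<le> s (LR j)" "a \<le> b"
  shows "GammaR s LR a \<le> GammaR s LR b"
  using assms(2)
proof (induction b)
  case 0 then show ?case by simp
next
  case (Suc b)
  show ?case
  proof (cases "a = Suc b")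
    case False
    then have "GammaR s LR a \<le> GammaR s LR b" using Suc by simp
    then show ?thesis using assms(1)[of "Suc b"] by (simp add: GammaR_Suc)
  qed simp
qed

lemma GammaS_mono:
  assumes "\<And>j. j \<ge> 1 \<Longrightarrow> 0 \<le> r (LS j)" "a \<le> b"
  shows "GammaS r LS a \<le> GammaS r LS b"
  using assms(2)
proof (induction b)
  case 0 then show ?case by simp
next
  case (Suc b)
  show ?case
  proof (cases "a = Suc b")
    case False
    then have "GammaS r LS a \<le> GammaS r LS b" using Suc by simp
    then show ?thesis using assms(1)[of "Suc b"] by (simp add: GammaS_Suc)
  qed simp
qed

lemma prob_vec_bounds:
  assumes "prob_vec r" "i \<ge> 1"
  shows "0 \<le> r i" "r i \<le> 1"
proof -
  show "0 \<le> r i" using assms unfolding prob_vec_def by auto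
  obtain k where k: "i = Suc k" using assms(2) by (cases i) auto
  have sm: "summable (\<lambda>i. r (Suc i))" and s1: "(\<Sum>i. r (Suc i)) = 1"
    using assms(1) unfolding prob_vec_def by (auto simp: sums_iff)
  have "sum (\<lambda>i. r (Suc i)) {k} \<le> (\<Sum>i. r (Suc i))"
    by (rule sum_le_suminf[OF sm]) (use assms(1) in \<open>auto simp: prob_vec_def\<close>)
  then show "r i \<le> 1" using k s1 by simp
qed

lemma le_gam:
  assumes "prob_vec r" "prob_vec s" "i \<ge> 1"
  shows "r i \<le> gam r s" "s i \<le> gam r s"
proof -
  have br: "bdd_above (r ` {1..})"
    by (rule bdd_aboveI[where M=1]) (use prob_vec_bounds(2)[OF assms(1)] in auto)
  have bs: "bdd_above (s ` {1..})"
    by (rule bdd_aboveI[where M=1]) (use prob_vec_bounds(2)[OF assms(2)] in auto)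
  have "r i \<le> (SUP i\<in>{1..}. r i)" using br assms(3) by (intro cSUP_upper) auto
  then show "r i \<le> gam r s" unfolding gam_def by linarith
  have "s i \<le> (SUP i\<in>{1..}. s i)" using bs assms(3) by (intro cSUP_upper) auto
  then show "s i \<le> gam r s" unfolding gam_def by linarith
qed

lemma invariants:
  assumes g: "greedy r s LR LS C"
    and nr: "\<And>j. j \<ge> 1 \<Longrightarrow> 0 \<le> r (LS j)"
    and ns: "\<And>j. j \<ge> 1 \<Longrightarrow> 0 \<le> s (LR j)"
  shows "(\<forall>a < n - Rcnt C n. GammaS r LS a \<le> GammaR s LR (Rcnt C n))
       \<and> (\<forall>a < Rcnt C n. GammaR s LR a \<le> GammaS r LS (n - Rcnt C n))"
proof (induction n)
  case 0 then show ?case by (simp add: Rcnt_0)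
next
  case (Suc n)
  have le: "Rcnt C n \<le> n" by (rule Rcnt_le)
  have gS0: "0 \<le> GammaS r LS m" for m using GammaS_mono[where r=r and LS=LS, OF nr, of 0 m] by (simp add: GammaS_0)
  have gR0: "0 \<le> GammaR s LR m" for m using GammaR_mono[where s=s and LR=LR, OF ns, of 0 m] by (simp add: GammaR_0)
  show ?case
  proof (cases "C (Suc n)")
    case True
    then have R: "Rcnt C (Suc n) = Suc (Rcnt C n)" by (simp add: Rcnt_Suc)
    have S: "Suc n - Rcnt C (Suc n) = n - Rcnt C n" using R by simp
    have new: "GammaR s LR (Rcnt C n) \<le> GammaS r LS (n - Rcnt C n)"
    proof (cases "n = 0")
      case True then show ?thesis using Rcnt_le[of C 0] gS0 by (simp add: GammaR_0)
    next
      case False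
      then have "\<not> GammaS r LS (n - Rcnt C n) < GammaR s LR (Rcnt C n)"
        using g True unfolding greedy_def by auto
      then show ?thesis by simp
    qed
    have A: "\<forall>a < Suc n - Rcnt C (Suc n). GammaS r LS a \<le> GammaR s LR (Rcnt C (Suc n))"
    proof (intro allI impI)
      fix a assume "a < Suc n - Rcnt C (Suc n)"
      then have "GammaS r LS a \<le> GammaR s LR (Rcnt C n)" using Suc.IH S by auto
      also have "\<dots> \<le> GammaR s LR (Rcnt C (Suc n))" using R by (intro GammaR_mono[where s=s and LR=LR, OF ns]) auto
      finally show "GammaS r LS a \<le> GammaR s LR (Rcnt C (Suc n))" .
    qed
    have B: "\<forall>a < Rcnt C (Suc n). GammaR s LR a \<le> GammaS r LS (Suc n - Rcnt C (Suc n))"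
      using Suc.IH new R S by (auto simp: less_Suc_eq)
    show ?thesis using A B by blast
  next
    case False
    then have R: "Rcnt C (Suc n) = Rcnt C n" by (simp add: Rcnt_Suc)
    have S: "Suc n - Rcnt C (Suc n) = Suc (n - Rcnt C n)" using R le by simp
    have new: "GammaS r LS (n - Rcnt C n) \<le> GammaR s LR (Rcnt C n)"
    proof (cases "n = 0")
      case True then show ?thesis using gR0 by (simp add: GammaS_0)
    next
      case False
      then have "\<not> GammaS r LS (n - Rcnt C n) > GammaR s LR (Rcnt C n)"
        using g \<open>\<not> C (Suc n)\<close> unfolding greedy_def by auto
      then show ?thesis by simp
    qed
    have B: "\<forall>a < Rcnt C (Suc n). GammaR s LR a \<le> GammaS r LS (Suc n - Rcnt C (Suc n))"
    proof (intro allI impI)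
      fix a assume "a < Rcnt C (Suc n)"
      then have "GammaR s LR a \<le> GammaS r LS (n - Rcnt C n)" using Suc.IH R by auto
      also have "\<dots> \<le> GammaS r LS (Suc n - Rcnt C (Suc n))" using S by (intro GammaS_mono[where r=r and LS=LS, OF nr]) auto
      finally show "GammaR s LR a \<le> GammaS r LS (Suc n - Rcnt C (Suc n))" .
    qed
    have A: "\<forall>a < Suc n - Rcnt C (Suc n). GammaS r LS a \<le> GammaR s LR (Rcnt C (Suc n))"
      using Suc.IH new R S by (auto simp: less_Suc_eq)
    show ?thesis using A B by blast
  qed
qed

theorem lemma3p1:
  fixes r s :: "nat \<Rightarrow> real" and LR LS :: "nat \<Rightarrow> nat" and C :: "nat \<Rightarrow> bool"
    and n :: nat and x :: real
  assumes "prob_vec r" and "prob_vec s"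
    and "(\<Sum>i. r (Suc i) * s (Suc i)) > 0"
    and "\<forall>j\<ge>1. LR j \<ge> 1" and "\<forall>j\<ge>1. LS j \<ge> 1"
    and "greedy r s LR LS C"
    and "n \<ge> 1" and "0 \<le> x" and "x \<le> real n"
  shows "(GammaR s LR (nat \<lceil>x\<rceil>) < GammaS r LS (n - nat \<lceil>x\<rceil>) - gam r s
            \<longrightarrow> real (Rcnt C n) > x)
       \<and> (real (Rcnt C n) > x
            \<longrightarrow> GammaR s LR (nat \<lfloor>x\<rfloor>) \<le> GammaS r LS (n - nat \<lfloor>x\<rfloor>) + gam r s)"
proof -
  have nr: "0 \<le> r (LS j)" if "j \<ge> 1" for j
    using prob_vec_bounds(1)[OF assms(1)] assms(5) that by auto
  have ns: "0 \<le> s (LR j)" if "j \<ge> 1" for j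
    using prob_vec_bounds(1)[OF assms(2)] assms(4) that by auto
  have rg: "r (LS j) \<le> gam r s" if "j \<ge> 1" for j
    using le_gam(1)[OF assms(1,2)] assms(5) that by auto
  have g0: "0 \<le> gam r s" using le_gam(1)[OF assms(1,2), of 1] prob_vec_bounds(1)[OF assms(1), of 1] by simp
  have gR0: "0 \<le> GammaR s LR m" for m using GammaR_mono[where s=s and LR=LR, OF ns, of 0 m] by (simp add: GammaR_0)
  note inv = invariants[OF assms(6) nr ns, of n]
  define R where "R = Rcnt C n"
  have Rle: "R \<le> n" unfolding R_def by (rule Rcnt_le)
  have P1: "real R > x" if H: "GammaR s LR (nat \<lceil>x\<rceil>) < GammaS r LS (n - nat \<lceil>x\<rceil>) - gam r s"
  proof (rule ccontr)
    assume "\<not> real R > x"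
    then have Rx: "real R \<le> x" by simp
    define k where "k = nat \<lceil>x\<rceil>"
    have Rk: "R \<le> k" unfolding k_def using Rx by linarith
    show False
    proof (cases "n - k = 0")
      case True
      then show False using H gR0[of k] g0 by (simp add: k_def GammaS_0)
    next
      case False
      then obtain b where b: "n - k = Suc b" by (cases "n - k") auto
      have "b < n - R" using b Rk by linarith
      then have "GammaS r LS b \<le> GammaR s LR R" using inv R_def by auto
      also have "\<dots> \<le> GammaR s LR k" using Rk by (intro GammaR_mono[where s=s and LR=LR, OF ns])
      finally have "GammaS r LS b \<le> GammaR s LR k" .
      moreover have "GammaS r LS (n - k) = GammaS r LS b + r (LS (Suc b))"
        using b by (simp add: GammaS_Suc)
      moreover have "r (LS (Suc b)) \<le> gam r s" using rg by simp
      ultimately show False using H unfolding k_def by linarith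
    qed
  qed
  have P2: "GammaR s LR (nat \<lfloor>x\<rfloor>) \<le> GammaS r LS (n - nat \<lfloor>x\<rfloor>) + gam r s" if H: "real R > x"
  proof -
    define k where "k = nat \<lfloor>x\<rfloor>"
    have kR: "k < R" unfolding k_def using H assms(8) by linarith
    then have "GammaR s LR k \<le> GammaS r LS (n - R)" using inv R_def by auto
    also have "\<dots> \<le> GammaS r LS (n - k)" using kR by (intro GammaS_mono[where r=r and LS=LS, OF nr]) auto
    finally show ?thesis using g0 unfolding k_def by linarith
  qed
  show ?thesis using P1 P2 R_def by blast
qed

end
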